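(* Let $G$ be a profinite group, written as the inverse limit $G = \varprojlim G_i$ of its finite quotients $G_i$, and let $H$ be a finite discrete abelian group. Then $H^2_{\mathrm{ts}}(G,H) = \varprojlim H^2_{\mathrm{ts}}(G_i,H)$.
   Context: A profinite group is a topological group isomorphic to an inverse limit of finite groups, with the inverse limit topology. For a topological group $G$ and an abelian topological group $H$, the topo-symmetric cohomology is $H^2_{\mathrm{ts}}(G,H) = Z^2_{\mathrm{ts}}(G,H)/B^2_{\mathrm{ts}}(G,H)$, where $Z^2_{\mathrm{ts}}(G,H)$ is the set of continuous 2-cocycles $c \in Z^2(G,H)$ satisfying $c(g,h) = c(h,g)$ for all $g,h \in G$, and $B^2_{\mathrm{ts}}(G,H)$ the coboundaries among them; it is a subgroup of the continuous cohomology group $H^2(G,H)$. *)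

theory Defs
  imports "HOL-Algebra.Algebra" "HOL-Analysis.Analysis"
begin

definition topological_group :: "('g,'a) monoid_scheme \<Rightarrow> 'g topology \<Rightarrow> bool" where
  "topological_group G T \<longleftrightarrow> group G \<and> topspace T = carrier G
     \<and> continuous_map (prod_topology T T) T (\<lambda>(x,y). x \<otimes>\<^bsub>G\<^esub> y)
     \<and> continuous_map T T (\<lambda>x. inv\<^bsub>G\<^esub> x)"

definition fin_quots :: "('g,'a) monoid_scheme \<Rightarrow> 'g topology \<Rightarrow> 'g set set" where
  "fin_quots G T = {N. N \<lhd> G \<and> openin T N \<and> finite (carrier (G Mod N))}"

text \<open>The inverse limit of the finite quotients G/N, as the set of compatible families of
  cosets (compatibility: for M \<subseteq> N the projection G/M \<rightarrow> G/N maps x M to x N, i.e.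
  x M \<subseteq> x N), with the subspace topology of the product of the discrete spaces G/N.\<close>
definition quot_limit :: "('g,'a) monoid_scheme \<Rightarrow> 'g topology \<Rightarrow> ('g set \<Rightarrow> 'g set) set" where
  "quot_limit G T = {x \<in> (\<Pi>\<^sub>E N\<in>fin_quots G T. carrier (G Mod N)).
      \<forall>N\<in>fin_quots G T. \<forall>M\<in>fin_quots G T. M \<subseteq> N \<longrightarrow> x M \<subseteq> x N}"

definition quot_limit_topology :: "('g,'a) monoid_scheme \<Rightarrow> 'g topology \<Rightarrow> ('g set \<Rightarrow> 'g set) topology" where
  "quot_limit_topology G T = subtopology
     (product_topology (\<lambda>N. discrete_topology (carrier (G Mod N))) (fin_quots G T))
     (quot_limit G T)"

text \<open>Profinite group: a topological group whose canonical map to the inverse limit of its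
  finite quotients is a homeomorphism (it is automatically a group homomorphism).\<close>
definition profinite_group :: "('g,'a) monoid_scheme \<Rightarrow> 'g topology \<Rightarrow> bool" where
  "profinite_group G T \<longleftrightarrow> topological_group G T \<and>
     homeomorphic_map T (quot_limit_topology G T) (\<lambda>g. \<lambda>N\<in>fin_quots G T. N #>\<^bsub>G\<^esub> g)"

text \<open>Continuous symmetric 2-cocycles of K (with topology TK) with values in the discrete abelian
  group H, trivial action.\<close>
definition Z2ts :: "('k,'a) monoid_scheme \<Rightarrow> 'k topology \<Rightarrow> ('h,'b) monoid_scheme \<Rightarrow> ('k \<times> 'k \<Rightarrow> 'h) set" where
  "Z2ts K TK H = {c. c \<in> carrier K \<times> carrier K \<rightarrow>\<^sub>E carrier H
     \<and> continuous_map (prod_topology TK TK) (discrete_topology (carrier H)) c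
     \<and> (\<forall>g\<in>carrier K. \<forall>h\<in>carrier K. \<forall>k\<in>carrier K.
          c (h, k) \<otimes>\<^bsub>H\<^esub> c (g, h \<otimes>\<^bsub>K\<^esub> k) = c (g \<otimes>\<^bsub>K\<^esub> h, k) \<otimes>\<^bsub>H\<^esub> c (g, h))
     \<and> (\<forall>g\<in>carrier K. \<forall>h\<in>carrier K. c (g, h) = c (h, g))}"

definition B2ts :: "('k,'a) monoid_scheme \<Rightarrow> 'k topology \<Rightarrow> ('h,'b) monoid_scheme \<Rightarrow> ('k \<times> 'k \<Rightarrow> 'h) set" where
  "B2ts K TK H = {c \<in> Z2ts K TK H. \<exists>f \<in> carrier K \<rightarrow>\<^sub>E carrier H.
     continuous_map TK (discrete_topology (carrier H)) f \<and>
     (\<forall>g\<in>carrier K. \<forall>h\<in>carrier K. c (g, h) = f g \<otimes>\<^bsub>H\<^esub> f h \<otimes>\<^bsub>H\<^esub> inv\<^bsub>H\<^esub> (f (g \<otimes>\<^bsub>K\<^esub> h)))}"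

text \<open>Two cocycles define the same class in H^2_ts = Z2ts / B2ts.\<close>
definition cohomologous :: "('k,'a) monoid_scheme \<Rightarrow> 'k topology \<Rightarrow> ('h,'b) monoid_scheme
    \<Rightarrow> ('k \<times> 'k \<Rightarrow> 'h) \<Rightarrow> ('k \<times> 'k \<Rightarrow> 'h) \<Rightarrow> bool" where
  "cohomologous K TK H c d \<longleftrightarrow> c \<in> Z2ts K TK H \<and> d \<in> Z2ts K TK H \<and>
     (\<lambda>x\<in>carrier K \<times> carrier K. c x \<otimes>\<^bsub>H\<^esub> inv\<^bsub>H\<^esub> (d x)) \<in> B2ts K TK H"

definition inflate :: "('l \<Rightarrow> 'k) \<Rightarrow> ('l,'a) monoid_scheme \<Rightarrow> ('k \<times> 'k \<Rightarrow> 'h) \<Rightarrow> ('l \<times> 'l \<Rightarrow> 'h)" where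
  "inflate p K' c = (\<lambda>x\<in>carrier K' \<times> carrier K'. c (p (fst x), p (snd x)))"

abbreviation quot_top :: "('g,'a) monoid_scheme \<Rightarrow> 'g set \<Rightarrow> 'g set topology" where
  "quot_top G N \<equiv> discrete_topology (carrier (G Mod N))"

end

theory Submission
  imports Defs
begin


lemma rcos_inter:
  fixes G (structure)
  assumes "group G" "subgroup N1 G" "subgroup N2 G" "g \<in> carrier G"
  shows "(N1 \<inter> N2) #>\<^bsub>G\<^esub> g = (N1 #>\<^bsub>G\<^esub> g) \<inter> (N2 #>\<^bsub>G\<^esub> g)"
proof -
  interpret group G by fact
  show ?thesis
  proof
    show "(N1 \<inter> N2) #> g \<subseteq> (N1 #> g) \<inter> (N2 #> g)" by (auto simp: r_coset_def)
    show "(N1 #> g) \<inter> (N2 #> g) \<subseteq> (N1 \<inter> N2) #> g"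
    proof
      fix x assume "x \<in> (N1 #> g) \<inter> (N2 #> g)"
      then obtain a b where a: "a \<in> N1" "x = a \<otimes> g" and b: "b \<in> N2" "x = b \<otimes> g"
        by (auto simp: r_coset_def)
      have "a \<in> carrier G" "b \<in> carrier G" using a b assms subgroup.subset by blast+
      then have "a = b" using a b assms(4) by (metis r_cancel)
      then show "x \<in> (N1 \<inter> N2) #> g" using a b by (auto simp: r_coset_def)
    qed
  qed
qed

lemma fin_quots_Int:
  fixes G (structure)
  assumes "group G" "N1 \<in> fin_quots G T" "N2 \<in> fin_quots G T"
  shows "N1 \<inter> N2 \<in> fin_quots G T"
proof -
  interpret group G by fact
  have n: "N1 \<lhd> G" "N2 \<lhd> G" using assms by (auto simp: fin_quots_def)
  have s: "subgroup N1 G" "subgroup N2 G" using n normal_imp_subgroup by auto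
  have "rcosets (N1 \<inter> N2) \<subseteq> (\<lambda>(A,B). A \<inter> B) ` ((rcosets N1) \<times> (rcosets N2))"
  proof
    fix C assume "C \<in> rcosets (N1 \<inter> N2)"
    then obtain g where g: "g \<in> carrier G" "C = (N1 \<inter> N2) #> g" by (auto simp: RCOSETS_def)
    then have "C = (N1 #> g) \<inter> (N2 #> g)" using rcos_inter[OF assms(1) s] by simp
    moreover have "N1 #> g \<in> rcosets N1" "N2 #> g \<in> rcosets N2"
      using g s by (auto intro!: rcosetsI subgroup.subset)
    ultimately show "C \<in> (\<lambda>(A,B). A \<inter> B) ` ((rcosets N1) \<times> (rcosets N2))" by force
  qed
  moreover have "finite ((rcosets N1) \<times> (rcosets N2))"
    using assms by (auto simp: fin_quots_def FactGroup_def)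
  ultimately have "finite (rcosets (N1 \<inter> N2))" by (meson finite_imageI finite_subset)
  then show ?thesis using assms normal_subgroup_intersect[OF n]
    by (auto simp: fin_quots_def FactGroup_def)
qed

lemma fin_quots_carrier:
  fixes G (structure)
  assumes "topological_group G T"
  shows "carrier G \<in> fin_quots G T"
proof -
  have g: "group G" using assms by (simp add: topological_group_def)
  interpret group G by fact
  have "carrier G \<lhd> G" by (simp add: normal_inv_iff subgroup_self)
  moreover have "rcosets (carrier G) = {carrier G}"
    using coset_join2[OF _ subgroup_self] by (auto simp: RCOSETS_def)
  moreover have "openin T (carrier G)" using assms by (metis openin_topspace topological_group_def)
  ultimately show ?thesis by (auto simp: fin_quots_def FactGroup_def)
qed

lemma fin_quots_Inter:
  fixes G (structure)
  assumes "topological_group G T" "finite P" "\<forall>p\<in>P. N p \<in> fin_quots G T"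
  shows "carrier G \<inter> \<Inter>(N ` P) \<in> fin_quots G T"
  using assms(2,3)
proof (induction P rule: finite_induct)
  case empty then show ?case using fin_quots_carrier[OF assms(1)] by simp
next
  case (insert p P)
  have "carrier G \<inter> \<Inter>(N ` insert p P) = N p \<inter> (carrier G \<inter> \<Inter>(N ` P))" by auto
  then show ?case using insert fin_quots_Int assms(1) by (auto simp: topological_group_def)
qed



lemma prof_top:
  fixes G (structure)
  assumes "profinite_group G T"
  shows "group G" "topspace T = carrier G"
  using assms by (auto simp: profinite_group_def topological_group_def)

lemma prof_hom:
  fixes G (structure)
  assumes "profinite_group G T"
  shows "homeomorphic_map T (quot_limit_topology G T) (\<lambda>g. \<lambda>N\<in>fin_quots G T. N #> g)"
  using assms by (auto simp: profinite_group_def)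

lemma quot_cont:
  fixes G (structure)
  assumes "profinite_group G T" "N \<in> fin_quots G T"
  shows "continuous_map T (quot_top G N) (\<lambda>g. N #> g)"
proof -
  let ?phi = "\<lambda>g. \<lambda>N\<in>fin_quots G T. N #> g"
  have "continuous_map T (quot_limit_topology G T) ?phi"
    using prof_hom[OF assms(1)] homeomorphic_imp_continuous_map by blast
  then have c: "continuous_map T (product_topology (\<lambda>N. quot_top G N) (fin_quots G T)) ?phi"
    unfolding quot_limit_topology_def using continuous_map_into_fulltopology by blast
  have "continuous_map T (quot_top G N) ((\<lambda>x. x N) \<circ> ?phi)"
    using continuous_map_compose[OF c continuous_map_product_projection[OF assms(2)]] .
  moreover have "(\<lambda>x. x N) \<circ> ?phi = (\<lambda>g. N #> g)" using assms(2) by auto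
  ultimately show ?thesis by simp
qed

lemma coset_open:
  fixes G (structure)
  assumes "profinite_group G T" "N \<in> fin_quots G T" "g \<in> carrier G"
  shows "openin T (N #> g)"
proof -
  have g: "group G" using prof_top[OF assms(1)] by simp
  interpret group G by fact
  have s: "subgroup N G" using assms(2) normal_imp_subgroup unfolding fin_quots_def by blast
  have Nc: "N \<subseteq> carrier G" using subgroup.subset[OF s] .
  have mem: "N #> g \<in> carrier (G Mod N)"
    using rcosetsI[OF Nc assms(3)] unfolding FactGroup_def by simp
  have "openin T {x \<in> topspace T. N #> x \<in> {N #> g}}"
    apply (rule openin_continuous_map_preimage[OF quot_cont[OF assms(1,2)]])
    using mem by simp
  moreover have "{x \<in> topspace T. N #> x \<in> {N #> g}} = N #> g"
  proof (rule equalityI; rule subsetI)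
    fix x assume "x \<in> {x \<in> topspace T. N #> x \<in> {N #> g}}"
    then have xc: "x \<in> carrier G" and e: "N #> g = N #> x" using prof_top[OF assms(1)] by auto
    show "x \<in> N #> g" using repr_independenceD[OF s xc e] .
  next
    fix x assume x: "x \<in> N #> g"
    have xc: "x \<in> carrier G" using subgroup.elemrcos_carrier[OF s g assms(3) x] .
    have "N #> g = N #> x" using repr_independence[OF x assms(3) s] .
    then show "x \<in> {x \<in> topspace T. N #> x \<in> {N #> g}}" using xc prof_top[OF assms(1)] by simp
  qed
  ultimately show ?thesis by simp
qed

lemma coset_absorb:
  fixes G (structure)
  assumes "group G" "subgroup N G" "n \<in> N" "g \<in> carrier G"
  shows "N #> (n \<otimes> g) = N #> g"
proof -
  interpret group G by fact
  have Nc: "N \<subseteq> carrier G" using subgroup.subset[OF assms(2)] .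
  have nc: "n \<in> carrier G" using Nc assms(3) by blast
  have "N #> (n \<otimes> g) = (N #> n) #> g"
    using coset_mult_assoc[OF Nc nc assms(4)] by simp
  also have "\<dots> = N #> g" using coset_join2[OF nc assms(2,3)] by simp
  finally show ?thesis .
qed

lemma nbhd:
  fixes G (structure)
  assumes "profinite_group G T" "openin T U" "g \<in> U"
  shows "\<exists>N\<in>fin_quots G T. N #> g \<subseteq> U"
proof -
  let ?phi = "\<lambda>g. \<lambda>N\<in>fin_quots G T. N #> g"
  let ?I = "fin_quots G T"
  let ?X = "\<lambda>N. quot_top G N"
  have gr: "group G" and tp: "topspace T = carrier G" using prof_top[OF assms(1)] by auto
  have tg: "topological_group G T" using assms(1) by (simp add: profinite_group_def)
  interpret group G by fact
  have hm: "homeomorphic_map T (quot_limit_topology G T) ?phi" using prof_hom[OF assms(1)] .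
  have cm: "continuous_map T (quot_limit_topology G T) ?phi" using homeomorphic_imp_continuous_map[OF hm] .
  have inj: "inj_on ?phi (topspace T)" using homeomorphic_imp_injective_map[OF hm] .
  have Ut: "U \<subseteq> carrier G" using openin_subset[OF assms(2)] tp by simp
  have gc: "g \<in> carrier G" using Ut assms(3) by blast
  have "openin (quot_limit_topology G T) (?phi ` U)"
    using homeomorphic_map_openness[OF hm] assms(2) tp Ut by simp
  then have "\<exists>W. openin (product_topology ?X ?I) W \<and> ?phi ` U = W \<inter> quot_limit G T"
    unfolding quot_limit_topology_def openin_subtopology .
  then obtain W where W: "openin (product_topology ?X ?I) W" "?phi ` U = W \<inter> quot_limit G T"
    by (elim exE conjE)
  have gW: "?phi g \<in> W" using W(2) assms(3) by blast
  have "\<exists>V. finite {i \<in> ?I. V i \<noteq> topspace (?X i)} \<and> (\<forall>i\<in>?I. openin (?X i) (V i)) \<and>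
     ?phi g \<in> Pi\<^sub>E ?I V \<and> Pi\<^sub>E ?I V \<subseteq> W"
    using bspec[OF W(1)[unfolded openin_product_topology_alt] gW] .
  then obtain V where V: "finite {i \<in> ?I. V i \<noteq> topspace (?X i)}"
     "?phi g \<in> Pi\<^sub>E ?I V" "Pi\<^sub>E ?I V \<subseteq> W"
    by (elim exE conjE)
  let ?F = "{i \<in> ?I. V i \<noteq> topspace (?X i)}"
  let ?K = "carrier G \<inter> \<Inter>(id ` ?F)"
  have K: "?K \<in> ?I" using fin_quots_Inter[OF tg V(1), of id] by simp
  have "?K #> g \<subseteq> U"
  proof
    fix x assume "x \<in> ?K #> g"
    then obtain k where k: "k \<in> ?K" "x = k \<otimes> g" unfolding r_coset_def by blast
    have xc: "x \<in> carrier G" using k gc by simp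
    have "?phi x \<in> Pi\<^sub>E ?I V"
    proof (rule PiE_I)
      fix N assume N: "N \<in> ?I"
      have sN: "subgroup N G" using N normal_imp_subgroup unfolding fin_quots_def by blast
      show "?phi x N \<in> V N"
      proof (cases "N \<in> ?F")
        case True
        then have "k \<in> N" using k by auto
        then have "N #> x = N #> g" using coset_absorb[OF gr sN _ gc] k by simp
        moreover have "?phi g N \<in> V N" using V(2) N by (rule PiE_mem)
        ultimately show ?thesis using N by simp
      next
        case False
        then have "V N = carrier (G Mod N)" using N by simp
        moreover have "N #> x \<in> carrier (G Mod N)"
          using rcosetsI[OF subgroup.subset[OF sN] xc] unfolding FactGroup_def by simp
        ultimately show ?thesis using N by simp
      qed
    next
      fix N assume "N \<notin> ?I" then show "?phi x N = undefined" by simp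
    qed
    then have "?phi x \<in> W" using V(3) by blast
    moreover have "?phi x \<in> topspace (quot_limit_topology G T)"
      using continuous_map_image_subset_topspace[OF cm] xc tp by blast
    then have "?phi x \<in> quot_limit G T" by (simp add: quot_limit_topology_def)
    ultimately have "?phi x \<in> ?phi ` U" using W(2) by blast
    then obtain u where u: "u \<in> U" "?phi x = ?phi u" by blast
    have "x = u" using inj_onD[OF inj u(2)] xc u(1) Ut tp by blast
    then show "x \<in> U" using u by simp
  qed
  then show ?thesis using K by blast
qed

lemma prof_compact:
  fixes G (structure)
  assumes "profinite_group G T"
  shows "compact_space T"
proof -
  let ?I = "fin_quots G T"
  let ?X = "\<lambda>N. quot_top G N"
  let ?P = "product_topology ?X ?I"
  have cP: "compact_space ?P"
    unfolding compact_space_product_topology compact_space_discrete_topology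
    by (auto simp: fin_quots_def)
  let ?C = "\<lambda>M N. {x \<in> topspace ?P. (x M, x N) \<in> {(a,b). a \<subseteq> b} \<inter> (carrier (G Mod M) \<times> carrier (G Mod N))}"
  have clC: "closedin ?P (?C M N)" if "M \<in> ?I" "N \<in> ?I" for M N
  proof (rule closedin_continuous_map_preimage)
    show "continuous_map ?P (prod_topology (?X M) (?X N)) (\<lambda>x. (x M, x N))"
      using that by (intro continuous_map_pairedI continuous_map_product_projection)
    show "closedin (prod_topology (?X M) (?X N)) ({(a,b). a \<subseteq> b} \<inter> (carrier (G Mod M) \<times> carrier (G Mod N)))"
      unfolding prod_topology_discrete_topology[symmetric] by auto
  qed
  have eq: "quot_limit G T = \<Inter>(insert (topspace ?P) {?C M N | M N. M \<in> ?I \<and> N \<in> ?I \<and> M \<subseteq> N})"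
  proof (rule equalityI; rule subsetI)
    fix x assume x: "x \<in> quot_limit G T"
    have xP: "x \<in> topspace ?P" using x unfolding quot_limit_def by simp
    have xc: "x M \<in> carrier (G Mod M)" if "M \<in> ?I" for M using xP that by (simp add: PiE_iff)
    have xr: "x M \<subseteq> x N" if "M \<in> ?I" "N \<in> ?I" "M \<subseteq> N" for M N
      using x that unfolding quot_limit_def by blast
    show "x \<in> \<Inter>(insert (topspace ?P) {?C M N | M N. M \<in> ?I \<and> N \<in> ?I \<and> M \<subseteq> N})"
    proof (rule InterI)
      fix S assume "S \<in> insert (topspace ?P) {?C M N | M N. M \<in> ?I \<and> N \<in> ?I \<and> M \<subseteq> N}"
      then consider "S = topspace ?P" | M N where "S = ?C M N" "M \<in> ?I" "N \<in> ?I" "M \<subseteq> N" by blast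
      then show "x \<in> S"
      proof cases
        case 1 then show ?thesis using xP by simp
      next
        case 2
        have "(x M, x N) \<in> {(a,b). a \<subseteq> b} \<inter> (carrier (G Mod M) \<times> carrier (G Mod N))"
          using xr[OF 2(2-4)] xc 2(2,3) by simp
        then show ?thesis using 2(1) xP by simp
      qed
    qed
  next
    fix x assume x: "x \<in> \<Inter>(insert (topspace ?P) {?C M N | M N. M \<in> ?I \<and> N \<in> ?I \<and> M \<subseteq> N})"
    have xP: "x \<in> topspace ?P" by (rule InterD[OF x]) simp
    have "x M \<subseteq> x N" if "M \<in> ?I" "N \<in> ?I" "M \<subseteq> N" for M N
    proof -
      have "?C M N \<in> insert (topspace ?P) {?C M N | M N. M \<in> ?I \<and> N \<in> ?I \<and> M \<subseteq> N}"
        using that by blast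
      then have "x \<in> ?C M N" by (rule InterD[OF x])
      then show ?thesis by simp
    qed
    then show "x \<in> quot_limit G T" using xP unfolding quot_limit_def by simp
  qed
  have "closedin ?P (quot_limit G T)"
    unfolding eq
  proof (rule closedin_Inter)
    fix S assume "S \<in> insert (topspace ?P) {?C M N | M N. M \<in> ?I \<and> N \<in> ?I \<and> M \<subseteq> N}"
    then consider "S = topspace ?P" | M N where "S = ?C M N" "M \<in> ?I" "N \<in> ?I" by blast
    then show "closedin ?P S"
    proof cases
      case 1 then show ?thesis by (simp only: closedin_topspace)
    next
      case 2 then show ?thesis using clC by simp
    qed
  qed simp
  then have "compact_space (quot_limit_topology G T)"
    unfolding quot_limit_topology_def
    using closedin_compact_space[OF cP] compact_space_subtopology by blast
  then show ?thesis
    using homeomorphic_compact_space homeomorphic_map_imp_homeomorphic_space[OF prof_hom[OF assms]]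
    by blast
qed



lemma coset_left_mult:
  fixes G (structure)
  assumes "group G" "subgroup N G" "n \<in> N" "x \<in> N #> a" "a \<in> carrier G"
  shows "n \<otimes> x \<in> N #> a"
proof -
  interpret group G by fact
  have Nc: "N \<subseteq> carrier G" using subgroup.subset[OF assms(2)] .
  obtain k where k: "k \<in> N" "x = k \<otimes> a" using assms(4) unfolding r_coset_def by blast
  have nc: "n \<in> carrier G" "k \<in> carrier G" using Nc k(1) assms(3) by auto
  have "n \<otimes> x = (n \<otimes> k) \<otimes> a" using k(2) m_assoc[OF nc assms(5)] by simp
  moreover have "n \<otimes> k \<in> N" using subgroup.m_closed[OF assms(2) assms(3) k(1)] .
  ultimately show ?thesis unfolding r_coset_def by blast
qed

lemma unif2:
  fixes G (structure)
  assumes pg: "profinite_group G T" and cc: "continuous_map (prod_topology T T) (discrete_topology S) c"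
  shows "\<exists>M\<in>fin_quots G T. \<forall>g\<in>carrier G. \<forall>h\<in>carrier G. \<forall>n\<in>M. \<forall>m\<in>M. c (n \<otimes> g, m \<otimes> h) = c (g, h)"
proof -
  let ?I = "fin_quots G T"
  have gr: "group G" and tp: "topspace T = carrier G" using prof_top[OF pg] by auto
  interpret group G by fact
  have tg: "topological_group G T" using pg by (simp add: profinite_group_def)
  have sub: "subgroup N G" if "N \<in> ?I" for N using that normal_imp_subgroup unfolding fin_quots_def by blast
  have loc: "\<exists>N\<in>?I. (N #> fst p) \<times> (N #> snd p) \<subseteq> {q. c q = c p}" if p: "p \<in> carrier G \<times> carrier G" for p
  proof -
    have pt: "p \<in> topspace (prod_topology T T)" using p tp by simp
    have "c p \<in> S" using continuous_map_image_subset_topspace[OF cc] pt by auto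
    then have "openin (prod_topology T T) {q \<in> topspace (prod_topology T T). c q \<in> {c p}}"
      by (intro openin_continuous_map_preimage[OF cc]) simp
    moreover have "(fst p, snd p) \<in> {q \<in> topspace (prod_topology T T). c q \<in> {c p}}" using pt by simp
    ultimately have "\<exists>U V. openin T U \<and> openin T V \<and> fst p \<in> U \<and> snd p \<in> V \<and>
       U \<times> V \<subseteq> {q \<in> topspace (prod_topology T T). c q \<in> {c p}}"
      unfolding openin_prod_topology_alt by blast
    then obtain U1 U2 where U: "openin T U1" "openin T U2" "fst p \<in> U1" "snd p \<in> U2"
      "U1 \<times> U2 \<subseteq> {q \<in> topspace (prod_topology T T). c q \<in> {c p}}"
      by (elim exE conjE)
    obtain N1 where N1: "N1 \<in> ?I" "N1 #> fst p \<subseteq> U1" using nbhd[OF pg U(1,3)] by blast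
    obtain N2 where N2: "N2 \<in> ?I" "N2 #> snd p \<subseteq> U2" using nbhd[OF pg U(2,4)] by blast
    have N: "N1 \<inter> N2 \<in> ?I" using fin_quots_Int[OF gr N1(1) N2(1)] .
    have "(N1 \<inter> N2) #> fst p \<subseteq> N1 #> fst p" "(N1 \<inter> N2) #> snd p \<subseteq> N2 #> snd p"
      unfolding r_coset_def by blast+
    then have "((N1 \<inter> N2) #> fst p) \<times> ((N1 \<inter> N2) #> snd p) \<subseteq> U1 \<times> U2" using N1 N2 by blast
    also have "\<dots> \<subseteq> {q. c q = c p}" using U(5) by blast
    finally show ?thesis using N by blast
  qed
  have ex: "\<forall>p\<in>carrier G \<times> carrier G. \<exists>N. N \<in> ?I \<and> (N #> fst p) \<times> (N #> snd p) \<subseteq> {q. c q = c p}"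
    using loc by blast
  obtain Nf where Nf: "\<forall>p\<in>carrier G \<times> carrier G. Nf p \<in> ?I \<and> (Nf p #> fst p) \<times> (Nf p #> snd p) \<subseteq> {q. c q = c p}"
    using bchoice[OF ex] by (elim exE)
  define Cv where "Cv p = (Nf p #> fst p) \<times> (Nf p #> snd p)" for p
  have cs: "compact_space (prod_topology T T)"
    using prof_compact[OF pg] compact_space_prod_topology by blast
  have op: "\<forall>U\<in>Cv ` (carrier G \<times> carrier G). openin (prod_topology T T) U"
  proof
    fix U assume "U \<in> Cv ` (carrier G \<times> carrier G)"
    then obtain p where p: "p \<in> carrier G \<times> carrier G" "U = Cv p" by blast
    have "Nf p \<in> ?I" using Nf p(1) by blast
    then have "openin T (Nf p #> fst p)" "openin T (Nf p #> snd p)"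
      using coset_open[OF pg] p(1) by auto
    then show "openin (prod_topology T T) U" unfolding p(2) Cv_def openin_prod_Times_iff by blast
  qed
  have cov: "topspace (prod_topology T T) \<subseteq> \<Union>(Cv ` (carrier G \<times> carrier G))"
  proof
    fix q assume "q \<in> topspace (prod_topology T T)"
    then have q: "q \<in> carrier G \<times> carrier G" using tp by simp
    have s: "subgroup (Nf q) G" using sub Nf q by blast
    have "fst q \<in> Nf q #> fst q" "snd q \<in> Nf q #> snd q"
      using rcos_self[OF _ s] q by auto
    then have "q \<in> Cv q" unfolding Cv_def by (simp add: mem_Times_iff)
    then show "q \<in> \<Union>(Cv ` (carrier G \<times> carrier G))" using q by blast
  qed
  have "\<exists>F. finite F \<and> F \<subseteq> Cv ` (carrier G \<times> carrier G) \<and> topspace (prod_topology T T) \<subseteq> \<Union>F"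
    using cs op cov unfolding compact_space_alt by blast
  then obtain F where F: "finite F" "F \<subseteq> Cv ` (carrier G \<times> carrier G)" "topspace (prod_topology T T) \<subseteq> \<Union>F"
    by (elim exE conjE)
  have "\<exists>P\<subseteq>carrier G \<times> carrier G. finite P \<and> F = Cv ` P" using finite_subset_image[OF F(1) F(2)] .
  then obtain P where P: "P \<subseteq> carrier G \<times> carrier G" "finite P" "F = Cv ` P"
    by (elim exE conjE)
  let ?M = "carrier G \<inter> \<Inter>(Nf ` P)"
  have "\<forall>p\<in>P. Nf p \<in> ?I" using Nf P(1) by blast
  then have M: "?M \<in> ?I" using fin_quots_Inter[OF tg P(2)] by simp
  have "c (n \<otimes> g, m \<otimes> h) = c (g, h)" if "g \<in> carrier G" "h \<in> carrier G" "n \<in> ?M" "m \<in> ?M" for g h n m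
  proof -
    have "(g, h) \<in> \<Union>F" using F(3) that(1,2) tp by auto
    then obtain p where p: "p \<in> P" "(g,h) \<in> Cv p" using P(3) by blast
    have pc: "p \<in> carrier G \<times> carrier G" using p P(1) by blast
    have nm: "n \<in> Nf p" "m \<in> Nf p" using that(3,4) p(1) by auto
    have s: "subgroup (Nf p) G" using sub Nf pc by blast
    have gh: "g \<in> Nf p #> fst p" "h \<in> Nf p #> snd p" using p(2) unfolding Cv_def by auto
    have fc: "fst p \<in> carrier G" "snd p \<in> carrier G" using pc by auto
    have "n \<otimes> g \<in> Nf p #> fst p" using coset_left_mult[OF gr s nm(1) gh(1) fc(1)] .
    moreover have "m \<otimes> h \<in> Nf p #> snd p" using coset_left_mult[OF gr s nm(2) gh(2) fc(2)] .
    ultimately have "(n \<otimes> g, m \<otimes> h) \<in> Cv p" unfolding Cv_def by simp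
    moreover have "Cv p \<subseteq> {q. c q = c p}" using Nf pc unfolding Cv_def by blast
    ultimately have "c (n \<otimes> g, m \<otimes> h) = c p" "c (g, h) = c p" using p(2) by blast+
    then show ?thesis by simp
  qed
  then show ?thesis using M by blast
qed

lemma unif1:
  fixes G (structure)
  assumes pg: "profinite_group G T" and cc: "continuous_map T (discrete_topology S) f"
  shows "\<exists>M\<in>fin_quots G T. \<forall>g\<in>carrier G. \<forall>n\<in>M. f (n \<otimes> g) = f g"
proof -
  have gr: "group G" using prof_top[OF pg] by simp
  interpret group G by fact
  have "continuous_map (prod_topology T T) (discrete_topology S) (f \<circ> fst)"
    using continuous_map_compose[OF continuous_map_fst cc] .
  then obtain M where M: "M \<in> fin_quots G T" "\<forall>g\<in>carrier G. \<forall>h\<in>carrier G. \<forall>n\<in>M. \<forall>m\<in>M. (f \<circ> fst) (n \<otimes> g, m \<otimes> h) = (f \<circ> fst) (g, h)"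
    using unif2[OF pg] by blast
  have "\<one> \<in> M" using M(1) normal_imp_subgroup subgroup.one_closed unfolding fin_quots_def by blast
  have "f (n \<otimes> g) = f g" if "g \<in> carrier G" "n \<in> M" for g n
    using bspec[OF bspec[OF bspec[OF bspec[OF M(2) that(1)] that(1)] that(2)] \<open>\<one> \<in> M\<close>] by simp
  then show ?thesis using M(1) by blast
qed



lemma Nmult:
  fixes G (structure)
  assumes "group G" "subgroup N G" "subgroup M G" "M \<subseteq> N" "g \<in> carrier G"
  shows "N <#> (M #> g) = N #> g"
proof -
  interpret group G by fact
  have "N <#> M = N"
  proof
    show "N <#> M \<subseteq> N" using assms subgroup.m_closed by (fastforce simp: set_mult_def)
    show "N \<subseteq> N <#> M"
    proof
      fix x assume "x \<in> N"
      then have "x = x \<otimes> \<one>" "\<one> \<in> M" using assms subgroup.subset subgroup.one_closed by (metis r_one subsetD)+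
      then show "x \<in> N <#> M" using \<open>x \<in> N\<close> by (auto simp: set_mult_def)
    qed
  qed
  then show ?thesis using setmult_rcos_assoc[of N M g] assms subgroup.subset by metis
qed

lemma rep_prop:
  fixes G (structure)
  assumes "group G" "subgroup M G" "g \<in> carrier G"
  shows "\<exists>m\<in>M. (SOME x. x \<in> carrier G \<and> M #> g = M #> x) = m \<otimes> g"
proof -
  interpret group G by fact
  let ?x = "SOME x. x \<in> carrier G \<and> M #> g = M #> x"
  have "?x \<in> carrier G \<and> M #> g = M #> ?x" by (rule someI_ex) (use assms in blast)
  then have "?x \<in> M #> g" using repr_independenceD[OF assms(2)] by metis
  then show ?thesis by (auto simp: r_coset_def)
qed

lemma rcos_car:
  fixes G (structure)
  assumes "group G" "N \<in> fin_quots G T" "g \<in> carrier G"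
  shows "N #> g \<in> carrier (G Mod N)"
proof -
  interpret group G by fact
  have s: "subgroup N G" using assms(2) normal_imp_subgroup unfolding fin_quots_def by blast
  show ?thesis using rcosetsI[OF subgroup.subset[OF s] assms(3)] unfolding FactGroup_def by simp
qed

lemma rcos_mult:
  fixes G (structure)
  assumes "group G" "N \<in> fin_quots G T" "g \<in> carrier G" "h \<in> carrier G"
  shows "(N #> g) \<otimes>\<^bsub>G Mod N\<^esub> (N #> h) = N #> (g \<otimes> h)"
proof -
  have "N \<lhd> G" using assms by (auto simp: fin_quots_def)
  then show ?thesis using normal.rcos_sum assms by (fastforce simp: FactGroup_def)
qed

lemma part1:
  fixes G (structure)
  assumes pg: "profinite_group G T" and N: "N \<in> fin_quots G T"
    and c: "c \<in> Z2ts (G Mod N) (quot_top G N) H"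
  shows "inflate (\<lambda>g. N #> g) G c \<in> Z2ts G T H"
proof -
  have gr: "group G" and tp: "topspace T = carrier G" using prof_top[OF pg] by auto
  interpret group G by fact
  let ?i = "inflate (\<lambda>g. N #> g) G c"
  have ival: "?i (g, h) = c (N #> g, N #> h)" if "g \<in> carrier G" "h \<in> carrier G" for g h
    using that by (simp add: inflate_def)
  have cP: "c \<in> carrier (G Mod N) \<times> carrier (G Mod N) \<rightarrow>\<^sub>E carrier H"
    and cC: "continuous_map (prod_topology (quot_top G N) (quot_top G N)) (discrete_topology (carrier H)) c"
    and cA: "\<forall>g\<in>carrier (G Mod N). \<forall>h\<in>carrier (G Mod N). \<forall>k\<in>carrier (G Mod N).
          c (h, k) \<otimes>\<^bsub>H\<^esub> c (g, h \<otimes>\<^bsub>G Mod N\<^esub> k) = c (g \<otimes>\<^bsub>G Mod N\<^esub> h, k) \<otimes>\<^bsub>H\<^esub> c (g, h)"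
    and cS: "\<forall>g\<in>carrier (G Mod N). \<forall>h\<in>carrier (G Mod N). c (g, h) = c (h, g)"
    using c by (auto simp: Z2ts_def)
  have rc: "\<And>g. g \<in> carrier G \<Longrightarrow> N #> g \<in> carrier (G Mod N)" using rcos_car[OF gr N] .
  have "?i \<in> carrier G \<times> carrier G \<rightarrow>\<^sub>E carrier H"
    unfolding inflate_def restrict_PiE_iff using cP rc by (auto simp: PiE_iff)
  moreover have "continuous_map (prod_topology T T) (discrete_topology (carrier H)) ?i"
  proof (rule continuous_map_eq)
    show "continuous_map (prod_topology T T) (discrete_topology (carrier H)) (c \<circ> (\<lambda>x. (N #> fst x, N #> snd x)))"
      by (intro continuous_map_compose[OF _ cC] continuous_map_pairedI
          continuous_map_compose[OF continuous_map_fst quot_cont[OF pg N], unfolded o_def]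
          continuous_map_compose[OF continuous_map_snd quot_cont[OF pg N], unfolded o_def])
    show "\<And>x. x \<in> topspace (prod_topology T T) \<Longrightarrow> (c \<circ> (\<lambda>x. (N #> fst x, N #> snd x))) x = ?i x"
      using tp by (auto simp: inflate_def)
  qed
  moreover have "?i (h, k) \<otimes>\<^bsub>H\<^esub> ?i (g, h \<otimes> k) = ?i (g \<otimes> h, k) \<otimes>\<^bsub>H\<^esub> ?i (g, h)"
    if "g \<in> carrier G" "h \<in> carrier G" "k \<in> carrier G" for g h k
  proof -
    have "c (N #> h, N #> k) \<otimes>\<^bsub>H\<^esub> c (N #> g, (N #> h) \<otimes>\<^bsub>G Mod N\<^esub> (N #> k))
       = c ((N #> g) \<otimes>\<^bsub>G Mod N\<^esub> (N #> h), N #> k) \<otimes>\<^bsub>H\<^esub> c (N #> g, N #> h)"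
      using cA rc[OF that(1)] rc[OF that(2)] rc[OF that(3)] by blast
    then show ?thesis using that ival rcos_mult[OF gr N] m_closed by simp
  qed
  moreover have "?i (g, h) = ?i (h, g)" if "g \<in> carrier G" "h \<in> carrier G" for g h
    using that cS rc ival by simp
  ultimately show ?thesis unfolding Z2ts_def by blast
qed



lemma Z2tsI:
  assumes "c \<in> carrier K \<times> carrier K \<rightarrow>\<^sub>E carrier H"
    "continuous_map (prod_topology TK TK) (discrete_topology (carrier H)) c"
    "\<And>g h k. g\<in>carrier K \<Longrightarrow> h\<in>carrier K \<Longrightarrow> k\<in>carrier K \<Longrightarrow>
          c (h, k) \<otimes>\<^bsub>H\<^esub> c (g, h \<otimes>\<^bsub>K\<^esub> k) = c (g \<otimes>\<^bsub>K\<^esub> h, k) \<otimes>\<^bsub>H\<^esub> c (g, h)"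
    "\<And>g h. g\<in>carrier K \<Longrightarrow> h\<in>carrier K \<Longrightarrow> c (g, h) = c (h, g)"
  shows "c \<in> Z2ts K TK H"
  unfolding Z2ts_def using assms by blast

lemma B2tsI:
  assumes "c \<in> Z2ts K TK H" "f \<in> carrier K \<rightarrow>\<^sub>E carrier H"
    "continuous_map TK (discrete_topology (carrier H)) f"
    "\<And>g h. g\<in>carrier K \<Longrightarrow> h\<in>carrier K \<Longrightarrow> c (g, h) = f g \<otimes>\<^bsub>H\<^esub> f h \<otimes>\<^bsub>H\<^esub> inv\<^bsub>H\<^esub> (f (g \<otimes>\<^bsub>K\<^esub> h))"
  shows "c \<in> B2ts K TK H"
  unfolding B2ts_def using assms by blast

lemma disc_cont:
  assumes "f \<in> A \<times> B \<rightarrow>\<^sub>E C"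
  shows "continuous_map (prod_topology (discrete_topology A) (discrete_topology B)) (discrete_topology C) f"
  unfolding prod_topology_discrete_topology[symmetric] continuous_map_from_discrete_topology
  using assms by (simp add: PiE_iff Pi_iff)

lemma part2:
  fixes G (structure)
  assumes pg: "profinite_group G T" and N: "N \<in> fin_quots G T"
    and c: "c \<in> B2ts (G Mod N) (quot_top G N) H"
  shows "inflate (\<lambda>g. N #> g) G c \<in> B2ts G T H"
proof -
  have gr: "group G" and tp: "topspace T = carrier G" using prof_top[OF pg] by auto
  interpret group G by fact
  let ?i = "inflate (\<lambda>g. N #> g) G c"
  have cZ: "c \<in> Z2ts (G Mod N) (quot_top G N) H" using c unfolding B2ts_def by blast
  obtain f where f: "f \<in> carrier (G Mod N) \<rightarrow>\<^sub>E carrier H"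
    "\<forall>g\<in>carrier (G Mod N). \<forall>h\<in>carrier (G Mod N). c (g, h) = f g \<otimes>\<^bsub>H\<^esub> f h \<otimes>\<^bsub>H\<^esub> inv\<^bsub>H\<^esub> (f (g \<otimes>\<^bsub>G Mod N\<^esub> h))"
    using c unfolding B2ts_def by blast
  have rc: "\<And>g. g \<in> carrier G \<Longrightarrow> N #> g \<in> carrier (G Mod N)" using rcos_car[OF gr N] .
  let ?f = "\<lambda>g\<in>carrier G. f (N #> g)"
  have fv: "\<And>x. x \<in> carrier (G Mod N) \<Longrightarrow> f x \<in> carrier H" using f(1) by (simp add: PiE_iff)
  show ?thesis
  proof (rule B2tsI[OF part1[OF pg N cZ]])
    show "?f \<in> carrier G \<rightarrow>\<^sub>E carrier H" using fv rc by (simp add: restrict_PiE_iff)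
    have "continuous_map (quot_top G N) (discrete_topology (carrier H)) f"
      using fv by simp
    then have "continuous_map T (discrete_topology (carrier H)) (f \<circ> (\<lambda>g. N #> g))"
      using continuous_map_compose[OF quot_cont[OF pg N]] by blast
    then show "continuous_map T (discrete_topology (carrier H)) ?f"
      by (rule continuous_map_eq) (simp add: tp)
    fix g h assume gh: "g \<in> carrier G" "h \<in> carrier G"
    have "c (N #> g, N #> h) = f (N #> g) \<otimes>\<^bsub>H\<^esub> f (N #> h) \<otimes>\<^bsub>H\<^esub> inv\<^bsub>H\<^esub> (f ((N #> g) \<otimes>\<^bsub>G Mod N\<^esub> (N #> h)))"
      using f(2) rc[OF gh(1)] rc[OF gh(2)] by blast
    then show "?i (g, h) = ?f g \<otimes>\<^bsub>H\<^esub> ?f h \<otimes>\<^bsub>H\<^esub> inv\<^bsub>H\<^esub> (?f (g \<otimes> h))"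
      using gh rcos_mult[OF gr N gh] by (simp add: inflate_def)
  qed
qed

lemma part3:
  fixes G (structure)
  assumes pg: "profinite_group G T" and H: "comm_group H"
    and c: "c \<in> Z2ts G T H"
  shows "\<exists>N\<in>fin_quots G T. \<exists>d\<in>Z2ts (G Mod N) (quot_top G N) H.
        cohomologous G T H (inflate (\<lambda>g. N #> g) G d) c"
proof -
  have gr: "group G" and tp: "topspace T = carrier G" using prof_top[OF pg] by auto
  interpret group G by fact
  interpret H: comm_group H by fact
  have cP: "c \<in> carrier G \<times> carrier G \<rightarrow>\<^sub>E carrier H"
    and cC: "continuous_map (prod_topology T T) (discrete_topology (carrier H)) c"
    and cA: "\<forall>g\<in>carrier G. \<forall>h\<in>carrier G. \<forall>k\<in>carrier G.
          c (h, k) \<otimes>\<^bsub>H\<^esub> c (g, h \<otimes> k) = c (g \<otimes> h, k) \<otimes>\<^bsub>H\<^esub> c (g, h)"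
    and cS: "\<forall>g\<in>carrier G. \<forall>h\<in>carrier G. c (g, h) = c (h, g)"
    using c unfolding Z2ts_def by blast+
  obtain M where M: "M \<in> fin_quots G T" "\<forall>g\<in>carrier G. \<forall>h\<in>carrier G. \<forall>n\<in>M. \<forall>m\<in>M. c (n \<otimes> g, m \<otimes> h) = c (g, h)"
    using unif2[OF pg cC] by blast
  have sM: "subgroup M G" using M(1) normal_imp_subgroup unfolding fin_quots_def by blast
  define rep where "rep C = (SOME x. x \<in> carrier G \<and> C = M #> x)" for C
  have rep: "\<exists>m\<in>M. rep (M #> g) = m \<otimes> g" if "g \<in> carrier G" for g
    using rep_prop[OF gr sM that] unfolding rep_def .
  have repc: "rep (M #> g) \<in> carrier G" if gc: "g \<in> carrier G" for g
  proof -
    obtain m where m: "m \<in> M" "rep (M #> g) = m \<otimes> g" using rep[OF gc] by blast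
    have "m \<in> carrier G" using subgroup.subset[OF sM] m(1) by blast
    then show ?thesis using m(2) gc by simp
  qed
  have cM: "carrier (G Mod M) = {M #> g | g. g \<in> carrier G}" unfolding FactGroup_def RCOSETS_def by auto
  have cv: "\<And>x. x \<in> carrier G \<times> carrier G \<Longrightarrow> c x \<in> carrier H" by (rule PiE_mem[OF cP])
  define d where "d = (\<lambda>x\<in>carrier (G Mod M) \<times> carrier (G Mod M). c (rep (fst x), rep (snd x)))"
  have rcM: "\<And>g. g \<in> carrier G \<Longrightarrow> M #> g \<in> carrier (G Mod M)" using rcos_car[OF gr M(1)] .
  have dval: "d (M #> g, M #> h) = c (g, h)" if gh: "g \<in> carrier G" "h \<in> carrier G" for g h
  proof -
    obtain m1 where m1: "m1 \<in> M" "rep (M #> g) = m1 \<otimes> g" using rep[OF gh(1)] by blast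
    obtain m2 where m2: "m2 \<in> M" "rep (M #> h) = m2 \<otimes> h" using rep[OF gh(2)] by blast
    have "d (M #> g, M #> h) = c (rep (M #> g), rep (M #> h))"
      using rcM[OF gh(1)] rcM[OF gh(2)] unfolding d_def by simp
    also have "\<dots> = c (g, h)" using m1 m2 M(2) gh by simp
    finally show ?thesis .
  qed
  have rcm: "\<And>g h. g \<in> carrier G \<Longrightarrow> h \<in> carrier G \<Longrightarrow> (M #> g) \<otimes>\<^bsub>G Mod M\<^esub> (M #> h) = M #> (g \<otimes> h)"
    using rcos_mult[OF gr M(1)] .
  have dP: "d \<in> carrier (G Mod M) \<times> carrier (G Mod M) \<rightarrow>\<^sub>E carrier H"
    unfolding d_def restrict_PiE_iff
  proof
    fix x assume "x \<in> carrier (G Mod M) \<times> carrier (G Mod M)"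
    then obtain g h where "g \<in> carrier G" "h \<in> carrier G" "fst x = M #> g" "snd x = M #> h"
      using cM by auto
    then show "c (rep (fst x), rep (snd x)) \<in> carrier H" using cv repc by simp
  qed
  have dZ: "d \<in> Z2ts (G Mod M) (quot_top G M) H"
  proof (rule Z2tsI[OF dP disc_cont[OF dP]])
    fix A B C assume asm: "A \<in> carrier (G Mod M)" "B \<in> carrier (G Mod M)" "C \<in> carrier (G Mod M)"
    obtain g where g: "g \<in> carrier G" "A = M #> g" using asm(1) cM by auto
    obtain h where h: "h \<in> carrier G" "B = M #> h" using asm(2) cM by auto
    obtain k where k: "k \<in> carrier G" "C = M #> k" using asm(3) cM by auto
    have "c (h, k) \<otimes>\<^bsub>H\<^esub> c (g, h \<otimes> k) = c (g \<otimes> h, k) \<otimes>\<^bsub>H\<^esub> c (g, h)"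
      using cA g(1) h(1) k(1) by blast
    then show "d (B, C) \<otimes>\<^bsub>H\<^esub> d (A, B \<otimes>\<^bsub>G Mod M\<^esub> C) = d (A \<otimes>\<^bsub>G Mod M\<^esub> B, C) \<otimes>\<^bsub>H\<^esub> d (A, B)"
      using g h k rcm dval by simp
  next
    fix A B assume asm: "A \<in> carrier (G Mod M)" "B \<in> carrier (G Mod M)"
    obtain g where g: "g \<in> carrier G" "A = M #> g" using asm(1) cM by auto
    obtain h where h: "h \<in> carrier G" "B = M #> h" using asm(2) cM by auto
    have "c (g, h) = c (h, g)" using cS g(1) h(1) by blast
    then show "d (A, B) = d (B, A)" using g h dval by simp
  qed
  have iZ: "inflate (\<lambda>g. M #> g) G d \<in> Z2ts G T H" using part1[OF pg M(1) dZ] .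
  have ieq: "inflate (\<lambda>g. M #> g) G d x = c x" if xc: "x \<in> carrier G \<times> carrier G" for x
  proof -
    obtain g h where "x = (g, h)" "g \<in> carrier G" "h \<in> carrier G" using xc by auto
    then show ?thesis using dval by (simp add: inflate_def)
  qed
  let ?q = "\<lambda>x\<in>carrier G \<times> carrier G. inflate (\<lambda>g. M #> g) G d x \<otimes>\<^bsub>H\<^esub> inv\<^bsub>H\<^esub> (c x)"
  let ?one = "\<lambda>x\<in>carrier G \<times> carrier G. \<one>\<^bsub>H\<^esub>"
  have qeq: "?q = ?one"
  proof (rule restrict_ext)
    fix x assume x: "x \<in> carrier G \<times> carrier G"
    show "inflate (\<lambda>g. M #> g) G d x \<otimes>\<^bsub>H\<^esub> inv\<^bsub>H\<^esub> (c x) = \<one>\<^bsub>H\<^esub>"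
      using ieq[OF x] cv[OF x] by simp
  qed
  have oneP: "?one \<in> carrier G \<times> carrier G \<rightarrow>\<^sub>E carrier H" by (simp add: restrict_PiE_iff)
  have oneC: "continuous_map (prod_topology T T) (discrete_topology (carrier H)) ?one"
    by (rule continuous_map_eq[of _ _ "\<lambda>x. \<one>\<^bsub>H\<^esub>"]) (simp_all add: tp)
  have oneZ: "?one \<in> Z2ts G T H"
    by (rule Z2tsI[OF oneP oneC]) simp_all
  have "?one \<in> B2ts G T H"
  proof (rule B2tsI[OF oneZ, of "\<lambda>g\<in>carrier G. \<one>\<^bsub>H\<^esub>"])
    show "(\<lambda>g\<in>carrier G. \<one>\<^bsub>H\<^esub>) \<in> carrier G \<rightarrow>\<^sub>E carrier H" by (simp add: restrict_PiE_iff)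
    show "continuous_map T (discrete_topology (carrier H)) (\<lambda>g\<in>carrier G. \<one>\<^bsub>H\<^esub>)"
      by (rule continuous_map_eq[of _ _ "\<lambda>x. \<one>\<^bsub>H\<^esub>"]) (simp_all add: tp)
  qed simp
  then have "?q \<in> B2ts G T H" using qeq by simp
  then have "cohomologous G T H (inflate (\<lambda>g. M #> g) G d) c"
    unfolding cohomologous_def using iZ c by blast
  then show ?thesis using M(1) dZ by blast
qed



lemma part4:
  fixes G (structure)
  assumes pg: "profinite_group G T" and H: "comm_group H" and N: "N \<in> fin_quots G T"
    and d: "d \<in> Z2ts (G Mod N) (quot_top G N) H"
    and dB: "inflate (\<lambda>g. N #> g) G d \<in> B2ts G T H"
  shows "\<exists>M\<in>fin_quots G T. M \<subseteq> N \<and>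
           inflate (\<lambda>C. set_mult G N C) (G Mod M) d \<in> B2ts (G Mod M) (quot_top G M) H"
proof -
  have gr: "group G" and tp: "topspace T = carrier G" using prof_top[OF pg] by auto
  interpret group G by fact
  have dP: "d \<in> carrier (G Mod N) \<times> carrier (G Mod N) \<rightarrow>\<^sub>E carrier H"
    and dA: "\<forall>g\<in>carrier (G Mod N). \<forall>h\<in>carrier (G Mod N). \<forall>k\<in>carrier (G Mod N).
          d (h, k) \<otimes>\<^bsub>H\<^esub> d (g, h \<otimes>\<^bsub>G Mod N\<^esub> k) = d (g \<otimes>\<^bsub>G Mod N\<^esub> h, k) \<otimes>\<^bsub>H\<^esub> d (g, h)"
    and dS: "\<forall>g\<in>carrier (G Mod N). \<forall>h\<in>carrier (G Mod N). d (g, h) = d (h, g)"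
    using d unfolding Z2ts_def by blast+
  obtain f where f: "f \<in> carrier G \<rightarrow>\<^sub>E carrier H"
     "continuous_map T (discrete_topology (carrier H)) f"
     "\<forall>g\<in>carrier G. \<forall>h\<in>carrier G. inflate (\<lambda>g. N #> g) G d (g, h) = f g \<otimes>\<^bsub>H\<^esub> f h \<otimes>\<^bsub>H\<^esub> inv\<^bsub>H\<^esub> (f (g \<otimes> h))"
    using dB unfolding B2ts_def by blast
  obtain M0 where M0: "M0 \<in> fin_quots G T" "\<forall>g\<in>carrier G. \<forall>n\<in>M0. f (n \<otimes> g) = f g"
    using unif1[OF pg f(2)] by blast
  define M where "M = M0 \<inter> N"
  have M: "M \<in> fin_quots G T" "M \<subseteq> N" using fin_quots_Int[OF gr M0(1) N] unfolding M_def by auto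
  have sM: "subgroup M G" using M(1) normal_imp_subgroup unfolding fin_quots_def by blast
  have sN: "subgroup N G" using N normal_imp_subgroup unfolding fin_quots_def by blast
  define rep where "rep C = (SOME x. x \<in> carrier G \<and> C = M #> x)" for C
  have rep: "\<exists>m\<in>M. rep (M #> g) = m \<otimes> g" if gc: "g \<in> carrier G" for g
    using rep_prop[OF gr sM gc] unfolding rep_def .
  have cM: "carrier (G Mod M) = {M #> g | g. g \<in> carrier G}" unfolding FactGroup_def RCOSETS_def by auto
  have rcM: "\<And>g. g \<in> carrier G \<Longrightarrow> M #> g \<in> carrier (G Mod M)" using rcos_car[OF gr M(1)] .
  have rcN: "\<And>g. g \<in> carrier G \<Longrightarrow> N #> g \<in> carrier (G Mod N)" using rcos_car[OF gr N] .
  have fv: "\<And>x. x \<in> carrier G \<Longrightarrow> f x \<in> carrier H" by (rule PiE_mem[OF f(1)])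
  define f' where "f' = (\<lambda>C\<in>carrier (G Mod M). f (rep C))"
  have f'val: "f' (M #> g) = f g" if gc: "g \<in> carrier G" for g
  proof -
    obtain m where m: "m \<in> M" "rep (M #> g) = m \<otimes> g" using rep[OF gc] by blast
    have "m \<in> M0" using m(1) unfolding M_def by blast
    then have "f (m \<otimes> g) = f g" using M0(2) gc by blast
    then show ?thesis using m(2) rcM[OF gc] unfolding f'_def by simp
  qed
  have rcm: "\<And>g h. g \<in> carrier G \<Longrightarrow> h \<in> carrier G \<Longrightarrow> (M #> g) \<otimes>\<^bsub>G Mod M\<^esub> (M #> h) = M #> (g \<otimes> h)"
    using rcos_mult[OF gr M(1)] .
  have rcn: "\<And>g h. g \<in> carrier G \<Longrightarrow> h \<in> carrier G \<Longrightarrow> (N #> g) \<otimes>\<^bsub>G Mod N\<^esub> (N #> h) = N #> (g \<otimes> h)"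
    using rcos_mult[OF gr N] .
  have NM: "N <#> (M #> g) = N #> g" if gc: "g \<in> carrier G" for g using Nmult[OF gr sN sM M(2) gc] .
  let ?e = "inflate (\<lambda>C. set_mult G N C) (G Mod M) d"
  have eval: "?e (M #> g, M #> h) = d (N #> g, N #> h)" if gh: "g \<in> carrier G" "h \<in> carrier G" for g h
    using rcM[OF gh(1)] rcM[OF gh(2)] NM[OF gh(1)] NM[OF gh(2)] unfolding inflate_def by simp
  have dv: "\<And>x. x \<in> carrier (G Mod N) \<times> carrier (G Mod N) \<Longrightarrow> d x \<in> carrier H" by (rule PiE_mem[OF dP])
  have eP: "?e \<in> carrier (G Mod M) \<times> carrier (G Mod M) \<rightarrow>\<^sub>E carrier H"
    unfolding inflate_def restrict_PiE_iff
  proof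
    fix x assume "x \<in> carrier (G Mod M) \<times> carrier (G Mod M)"
    then obtain g h where gh: "g \<in> carrier G" "h \<in> carrier G" "fst x = M #> g" "snd x = M #> h"
      using cM by auto
    then show "d (N <#> fst x, N <#> snd x) \<in> carrier H" using NM dv rcN by simp
  qed
  have eZ: "?e \<in> Z2ts (G Mod M) (quot_top G M) H"
  proof (rule Z2tsI[OF eP disc_cont[OF eP]])
    fix A B C assume asm: "A \<in> carrier (G Mod M)" "B \<in> carrier (G Mod M)" "C \<in> carrier (G Mod M)"
    obtain g where g: "g \<in> carrier G" "A = M #> g" using asm(1) cM by auto
    obtain h where h: "h \<in> carrier G" "B = M #> h" using asm(2) cM by auto
    obtain k where k: "k \<in> carrier G" "C = M #> k" using asm(3) cM by auto
    have "d (N #> h, N #> k) \<otimes>\<^bsub>H\<^esub> d (N #> g, (N #> h) \<otimes>\<^bsub>G Mod N\<^esub> (N #> k))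
       = d ((N #> g) \<otimes>\<^bsub>G Mod N\<^esub> (N #> h), N #> k) \<otimes>\<^bsub>H\<^esub> d (N #> g, N #> h)"
      using dA rcN[OF g(1)] rcN[OF h(1)] rcN[OF k(1)] by blast
    then show "?e (B, C) \<otimes>\<^bsub>H\<^esub> ?e (A, B \<otimes>\<^bsub>G Mod M\<^esub> C) = ?e (A \<otimes>\<^bsub>G Mod M\<^esub> B, C) \<otimes>\<^bsub>H\<^esub> ?e (A, B)"
      using g h k rcm rcn eval by simp
  next
    fix A B assume asm: "A \<in> carrier (G Mod M)" "B \<in> carrier (G Mod M)"
    obtain g where g: "g \<in> carrier G" "A = M #> g" using asm(1) cM by auto
    obtain h where h: "h \<in> carrier G" "B = M #> h" using asm(2) cM by auto
    have "d (N #> g, N #> h) = d (N #> h, N #> g)" using dS rcN[OF g(1)] rcN[OF h(1)] by blast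
    then show "?e (A, B) = ?e (B, A)" using g h eval by simp
  qed
  have f'P: "f' \<in> carrier (G Mod M) \<rightarrow>\<^sub>E carrier H"
    unfolding f'_def restrict_PiE_iff
  proof
    fix C assume "C \<in> carrier (G Mod M)"
    then obtain g where g: "g \<in> carrier G" "C = M #> g" using cM by auto
    have "f' C = f (rep C)" using rcM[OF g(1)] g(2) unfolding f'_def by simp
    moreover have "f' C = f g" using f'val[OF g(1)] g(2) by simp
    ultimately have "f (rep C) = f g" by simp
    then show "f (rep C) \<in> carrier H" using fv[OF g(1)] by simp
  qed
  have "?e \<in> B2ts (G Mod M) (quot_top G M) H"
  proof (rule B2tsI[OF eZ f'P])
    show "continuous_map (quot_top G M) (discrete_topology (carrier H)) f'"
      using f'P by (simp add: PiE_iff)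
    fix A B assume asm: "A \<in> carrier (G Mod M)" "B \<in> carrier (G Mod M)"
    obtain g where g: "g \<in> carrier G" "A = M #> g" using asm(1) cM by auto
    obtain h where h: "h \<in> carrier G" "B = M #> h" using asm(2) cM by auto
    have "?e (A, B) = inflate (\<lambda>g. N #> g) G d (g, h)"
      using g h eval unfolding inflate_def by simp
    also have "\<dots> = f g \<otimes>\<^bsub>H\<^esub> f h \<otimes>\<^bsub>H\<^esub> inv\<^bsub>H\<^esub> (f (g \<otimes> h))" using f(3) g(1) h(1) by blast
    also have "\<dots> = f' A \<otimes>\<^bsub>H\<^esub> f' B \<otimes>\<^bsub>H\<^esub> inv\<^bsub>H\<^esub> (f' (A \<otimes>\<^bsub>G Mod M\<^esub> B))"
      using g h rcm f'val by simp
    finally show "?e (A, B) = f' A \<otimes>\<^bsub>H\<^esub> f' B \<otimes>\<^bsub>H\<^esub> inv\<^bsub>H\<^esub> (f' (A \<otimes>\<^bsub>G Mod M\<^esub> B))" .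
  qed
  then show ?thesis using M by blast
qed


theorem mainTheorem9:
  fixes G :: "('g,'a) monoid_scheme" and T :: "'g topology" and H :: "('h,'b) monoid_scheme"
  assumes "profinite_group G T" and "comm_group H" and "finite (carrier H)"
  shows
    \<comment> \<open>inflation G \<rightarrow> G/N gives well-defined maps H^2_ts(G/N,H) \<rightarrow> H^2_ts(G,H)\<close>
    "(\<forall>N\<in>fin_quots G T. \<forall>c\<in>Z2ts (G Mod N) (quot_top G N) H.
        inflate (\<lambda>g. N #>\<^bsub>G\<^esub> g) G c \<in> Z2ts G T H)
   \<and> (\<forall>N\<in>fin_quots G T. \<forall>c\<in>B2ts (G Mod N) (quot_top G N) H.
        inflate (\<lambda>g. N #>\<^bsub>G\<^esub> g) G c \<in> B2ts G T H)
    \<comment> \<open>the induced map from the direct limit is surjective\<close>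
   \<and> (\<forall>c\<in>Z2ts G T H. \<exists>N\<in>fin_quots G T. \<exists>d\<in>Z2ts (G Mod N) (quot_top G N) H.
        cohomologous G T H (inflate (\<lambda>g. N #>\<^bsub>G\<^esub> g) G d) c)
    \<comment> \<open>and injective: a class on G/N dying on G already dies on some smaller finite quotient G/M\<close>
   \<and> (\<forall>N\<in>fin_quots G T. \<forall>d\<in>Z2ts (G Mod N) (quot_top G N) H.
        inflate (\<lambda>g. N #>\<^bsub>G\<^esub> g) G d \<in> B2ts G T H \<longrightarrow>
        (\<exists>M\<in>fin_quots G T. M \<subseteq> N \<and>
           inflate (\<lambda>C. set_mult G N C) (G Mod M) d \<in> B2ts (G Mod M) (quot_top G M) H))"
  proof (intro conjI ballI impI)
  fix N c assume "N \<in> fin_quots G T" "c \<in> Z2ts (G Mod N) (quot_top G N) H"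
  then show "inflate (\<lambda>g. N #>\<^bsub>G\<^esub> g) G c \<in> Z2ts G T H" by (rule part1[OF assms(1)])
next
  fix N c assume "N \<in> fin_quots G T" "c \<in> B2ts (G Mod N) (quot_top G N) H"
  then show "inflate (\<lambda>g. N #>\<^bsub>G\<^esub> g) G c \<in> B2ts G T H" by (rule part2[OF assms(1)])
next
  fix c assume "c \<in> Z2ts G T H"
  then show "\<exists>N\<in>fin_quots G T. \<exists>d\<in>Z2ts (G Mod N) (quot_top G N) H.
        cohomologous G T H (inflate (\<lambda>g. N #>\<^bsub>G\<^esub> g) G d) c" by (rule part3[OF assms(1,2)])
next
  fix N d assume "N \<in> fin_quots G T" "d \<in> Z2ts (G Mod N) (quot_top G N) H"
    "inflate (\<lambda>g. N #>\<^bsub>G\<^esub> g) G d \<in> B2ts G T H"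
  then show "\<exists>M\<in>fin_quots G T. M \<subseteq> N \<and>
           inflate (\<lambda>C. set_mult G N C) (G Mod M) d \<in> B2ts (G Mod M) (quot_top G M) H"
    by (rule part4[OF assms(1,2)])
qed

end
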